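(* For an integer $n\ge 0$ let $\Omega_n$ be the set of integer pairs $(p,q)$ with $0\le p\le n$, $0\le q\le n$, $(p,q)\ne(n,n)$, and let $\mathcal A_n$ be the linear span (over $\mathbb C$) of the rational functions $\frac{z^p\,\overline z^{\,q}}{(z-\overline z)^n}$, $(p,q)\in\Omega_n$, regarded as functions on the upper half-plane $\Lambda=\{z:\operatorname{Im}z>0\}$. Let $\mathcal A=\sum_{n\ge0}\mathcal A_n$. Consider the six operators $$\frac{\partial}{\partial z},\quad z\frac{\partial}{\partial z},\quad z^2\frac{\partial}{\partial z},\quad \frac{\partial}{\partial \overline z},\quad \overline z\frac{\partial}{\partial \overline z},\quad \overline z^{\,2}\frac{\partial}{\partial \overline z}.$$ Then: (a) $\mathcal A$ is invariant under each of these six operators; (b) the function $\frac{1}{z-\overline z}$ is cyclic in $\mathcal A$ for this family, i.e. the linear span of all functions obtained by applying finite products of these six operators (including the empty product) to $\frac1{z-\overline z}$ is equal to $\mathcal A$.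
   Context: $\frac{\partial}{\partial z}$, $\frac{\partial}{\partial\overline z}$ are the Wirtinger derivatives, $z$ and $\overline z$ are treated as independent variables in these rational functions. *)

theory Defs
  imports "HOL-Analysis.Analysis"
begin

text \<open>Functions of the two independent variables z and w (w plays the role of conj z),
  considered on the domain Im z > 0, Im w < 0 (i.e. z in the upper half-plane, w = conj z
  in the lower half-plane); all functions are set to 0 outside this domain.\<close>

type_synonym cfun2 = "complex \<Rightarrow> complex \<Rightarrow> complex"

definition dom2 :: "complex \<Rightarrow> complex \<Rightarrow> bool" where
  "dom2 z w \<longleftrightarrow> Im z > 0 \<and> Im w < 0"

definition restr :: "cfun2 \<Rightarrow> cfun2" where
  "restr f = (\<lambda>z w. if dom2 z w then f z w else 0)"

definition cspan2 :: "cfun2 set \<Rightarrow> cfun2 set" where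
  "cspan2 X = {f. \<exists>S c. finite S \<and> S \<subseteq> X \<and> f = (\<lambda>z w. \<Sum>g\<in>S. c g * g z w)}"

definition Omega :: "nat \<Rightarrow> (nat \<times> nat) set" where
  "Omega n = {(p, q). p \<le> n \<and> q \<le> n \<and> (p, q) \<noteq> (n, n)}"

definition basis_fun :: "nat \<Rightarrow> nat \<Rightarrow> nat \<Rightarrow> cfun2" where
  "basis_fun n p q = restr (\<lambda>z w. z ^ p * w ^ q / (z - w) ^ n)"

definition A_n :: "nat \<Rightarrow> cfun2 set" where
  "A_n n = cspan2 ((\<lambda>(p, q). basis_fun n p q) ` Omega n)"

definition A_all :: "cfun2 set" where
  "A_all = {f. \<exists>N g. finite N \<and> (\<forall>n\<in>N. g n \<in> A_n n) \<and> f = (\<lambda>z w. \<Sum>n\<in>N. g n z w)}"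

definition Dz :: "cfun2 \<Rightarrow> cfun2" where
  "Dz f = restr (\<lambda>z w. deriv (\<lambda>\<zeta>. f \<zeta> w) z)"

definition Dw :: "cfun2 \<Rightarrow> cfun2" where
  "Dw f = restr (\<lambda>z w. deriv (\<lambda>\<omega>. f z \<omega>) w)"

definition six_ops :: "(cfun2 \<Rightarrow> cfun2) set" where
  "six_ops = {Dz, (\<lambda>f z w. z * Dz f z w), (\<lambda>f z w. z ^ 2 * Dz f z w),
              Dw, (\<lambda>f z w. w * Dw f z w), (\<lambda>f z w. w ^ 2 * Dw f z w)}"

end

theory Submission
  imports Defs
begin

lemma alg1:
  fixes a P Q :: complex
  assumes "a \<noteq> 0"
  shows "(P * a^n - Q * (of_nat n * a^(n-1))) / (a^n * a^n) = P / a^n - of_nat n * Q / a^(Suc n)"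
proof (cases n)
  case 0 then show ?thesis by simp
next
  case (Suc k)
  have "(P * a^n - Q * (of_nat n * a^(n-1))) / (a^n * a^n) = (P * a - Q * of_nat n) * a^k / (a^k * a * (a^k * a))"
    using Suc by (simp add: algebra_simps)
  also have "\<dots> = (P * a - Q * of_nat n) / (a^k * a * a)" using assms by (simp add: field_simps)
  also have "\<dots> = P / a^n - of_nat n * Q / a^(Suc n)" using assms Suc by (simp add: field_simps)
  finally show ?thesis .
qed

lemma hdz:
  fixes z w :: complex
  assumes "z \<noteq> w"
  shows "((\<lambda>x. x^p * w^q / (x - w)^n) has_field_derivative
     (of_nat p * z^(p-1) * w^q / (z-w)^n - of_nat n * (z^p * w^q) / (z-w)^(Suc n))) (at z)"
proof -
  have nz: "z - w \<noteq> 0" using assms by simp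
  have "((\<lambda>x. x^p * w^q / (x - w)^n) has_field_derivative
     ((of_nat p * z^(p-1) * w^q) * (z-w)^n - (z^p*w^q) * (of_nat n * (z-w)^(n-1))) / ((z-w)^n * (z-w)^n)) (at z)"
    by (rule derivative_eq_intros refl)+ (use assms in auto)
  then show ?thesis unfolding alg1[OF nz] by simp
qed

lemma hdw:
  fixes z w :: complex
  assumes "z \<noteq> w"
  shows "((\<lambda>x. z^p * x^q / (z - x)^n) has_field_derivative
     (of_nat q * z^p * w^(q-1) / (z-w)^n + of_nat n * (z^p * w^q) / (z-w)^(Suc n))) (at w)"
proof -
  have nz: "z - w \<noteq> 0" using assms by simp
  have "((\<lambda>x. z^p * x^q / (z - x)^n) has_field_derivative
     ((of_nat q * z^p * w^(q-1)) * (z-w)^n - (- (z^p*w^q)) * (of_nat n * (z-w)^(n-1))) / ((z-w)^n * (z-w)^n)) (at w)"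
    by (rule derivative_eq_intros refl)+ (use assms in auto)
  then show ?thesis unfolding alg1[OF nz] by simp
qed

lemma dom2_ne: "dom2 z w \<Longrightarrow> z \<noteq> w"
  unfolding dom2_def by auto

lemma bf_val: "dom2 z w \<Longrightarrow> basis_fun n p q z w = z^p * w^q / (z-w)^n"
  by (simp add: basis_fun_def restr_def)

lemma bf_out: "\<not> dom2 z w \<Longrightarrow> basis_fun n p q z w = 0"
  by (simp add: basis_fun_def restr_def)

lemma bf_dz:
  assumes "dom2 z w"
  shows "((\<lambda>x. basis_fun n p q x w) has_field_derivative
     (of_nat p * z^(p-1) * w^q / (z-w)^n - of_nat n * (z^p * w^q) / (z-w)^(Suc n))) (at z)"
proof (rule has_field_derivative_transform_within_open[OF hdz[OF dom2_ne[OF assms]]])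
  show "open {x. Im x > 0}" by (rule open_halfspace_Im_gt)
  show "z \<in> {x. Im x > 0}" using assms by (simp add: dom2_def)
  show "\<And>x. x \<in> {x. 0 < Im x} \<Longrightarrow> x ^ p * w ^ q / (x - w) ^ n = basis_fun n p q x w"
    using assms by (simp add: bf_val dom2_def)
qed

lemma bf_dw:
  assumes "dom2 z w"
  shows "((\<lambda>x. basis_fun n p q z x) has_field_derivative
     (of_nat q * z^p * w^(q-1) / (z-w)^n + of_nat n * (z^p * w^q) / (z-w)^(Suc n))) (at w)"
proof (rule has_field_derivative_transform_within_open[OF hdw[OF dom2_ne[OF assms]]])
  show "open {x. Im x < 0}" by (rule open_halfspace_Im_lt)
  show "w \<in> {x. Im x < 0}" using assms by (simp add: dom2_def)
  show "\<And>x. x \<in> {x. Im x < 0} \<Longrightarrow> z ^ p * x ^ q / (z - x) ^ n = basis_fun n p q z x"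
    using assms by (simp add: bf_val dom2_def)
qed

lemma Dz_bf: "Dz (basis_fun n p q) = (\<lambda>z w. of_nat p * basis_fun n (p-1) q z w - of_nat n * basis_fun (Suc n) p q z w)"
proof (intro ext)
  fix z w
  show "Dz (basis_fun n p q) z w = of_nat p * basis_fun n (p-1) q z w - of_nat n * basis_fun (Suc n) p q z w"
  proof (cases "dom2 z w")
    case True
    then show ?thesis using DERIV_imp_deriv[OF bf_dz[OF True]]
      by (simp add: Dz_def restr_def bf_val)
  qed (simp add: Dz_def restr_def bf_out)
qed

lemma Dw_bf: "Dw (basis_fun n p q) = (\<lambda>z w. of_nat q * basis_fun n p (q-1) z w + of_nat n * basis_fun (Suc n) p q z w)"
proof (intro ext)
  fix z w
  show "Dw (basis_fun n p q) z w = of_nat q * basis_fun n p (q-1) z w + of_nat n * basis_fun (Suc n) p q z w"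
  proof (cases "dom2 z w")
    case True
    then show ?thesis using DERIV_imp_deriv[OF bf_dw[OF True]]
      by (simp add: Dw_def restr_def bf_val)
  qed (simp add: Dw_def restr_def bf_out)
qed

lemma pz: "(of_nat p :: complex) * (z * z^(p-1)) = of_nat p * z^p"
  by (cases p) auto

lemma zDz_bf: "(\<lambda>z w. z * Dz (basis_fun n p q) z w) = (\<lambda>z w. of_nat p * basis_fun n p q z w - of_nat n * basis_fun (Suc n) (Suc p) q z w)"
proof (intro ext)
  fix z w :: complex
  show "z * Dz (basis_fun n p q) z w = of_nat p * basis_fun n p q z w - of_nat n * basis_fun (Suc n) (Suc p) q z w"
  proof (cases "dom2 z w")
    case True
    have "z * (of_nat p * (z^(p-1) * w^q / (z-w)^n)) = of_nat p * (z^p * w^q / (z-w)^n)"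
      by (cases p) (auto simp: field_simps)
    then show ?thesis using True by (simp add: Dz_bf bf_val algebra_simps)
  qed (simp add: Dz_bf bf_out)
qed

lemma z2Dz_bf: "(\<lambda>z w. z^2 * Dz (basis_fun n p q) z w) = (\<lambda>z w. of_nat p * basis_fun n (Suc p) q z w - of_nat n * basis_fun (Suc n) (Suc (Suc p)) q z w)"
proof (intro ext)
  fix z w :: complex
  show "z^2 * Dz (basis_fun n p q) z w = of_nat p * basis_fun n (Suc p) q z w - of_nat n * basis_fun (Suc n) (Suc (Suc p)) q z w"
  proof (cases "dom2 z w")
    case True
    have "z^2 * (of_nat p * (z^(p-1) * w^q / (z-w)^n)) = of_nat p * (z^(Suc p) * w^q / (z-w)^n)"
      by (cases p) (auto simp: field_simps power2_eq_square)
    then show ?thesis using True by (simp add: Dz_bf bf_val algebra_simps power2_eq_square)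
  qed (simp add: Dz_bf bf_out)
qed

lemma wDw_bf: "(\<lambda>z w. w * Dw (basis_fun n p q) z w) = (\<lambda>z w. of_nat q * basis_fun n p q z w + of_nat n * basis_fun (Suc n) p (Suc q) z w)"
proof (intro ext)
  fix z w :: complex
  show "w * Dw (basis_fun n p q) z w = of_nat q * basis_fun n p q z w + of_nat n * basis_fun (Suc n) p (Suc q) z w"
  proof (cases "dom2 z w")
    case True
    have "w * (of_nat q * (z^p * w^(q-1) / (z-w)^n)) = of_nat q * (z^p * w^q / (z-w)^n)"
      by (cases q) (auto simp: field_simps)
    then show ?thesis using True by (simp add: Dw_bf bf_val algebra_simps)
  qed (simp add: Dw_bf bf_out)
qed

lemma w2Dw_bf: "(\<lambda>z w. w^2 * Dw (basis_fun n p q) z w) = (\<lambda>z w. of_nat q * basis_fun n p (Suc q) z w + of_nat n * basis_fun (Suc n) p (Suc (Suc q)) z w)"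
proof (intro ext)
  fix z w :: complex
  show "w^2 * Dw (basis_fun n p q) z w = of_nat q * basis_fun n p (Suc q) z w + of_nat n * basis_fun (Suc n) p (Suc (Suc q)) z w"
  proof (cases "dom2 z w")
    case True
    have "w^2 * (of_nat q * (z^p * w^(q-1) / (z-w)^n)) = of_nat q * (z^p * w^(Suc q) / (z-w)^n)"
      by (cases q) (auto simp: field_simps power2_eq_square)
    then show ?thesis using True by (simp add: Dw_bf bf_val algebra_simps power2_eq_square)
  qed (simp add: Dw_bf bf_out)
qed

lemma rel_pt: "basis_fun k a b z w = basis_fun (Suc k) (Suc a) b z w - basis_fun (Suc k) a (Suc b) z w"
proof (cases "dom2 z w")
  case True
  then have nz: "z - w \<noteq> 0" using dom2_ne by auto
  have "z^(Suc a)*w^b/(z-w)^(Suc k) - z^a*w^(Suc b)/(z-w)^(Suc k) = (z^a*w^b*(z-w))/((z-w)^k*(z-w))"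
    by (simp add: diff_divide_distrib[symmetric] algebra_simps)
  also have "\<dots> = z^a*w^b/(z-w)^k" using nz by simp
  finally show ?thesis using True by (simp add: bf_val)
qed (simp add: bf_out)



definition nice :: "cfun2 \<Rightarrow> bool" where
  "nice f \<longleftrightarrow> (\<forall>z w. dom2 z w \<longrightarrow> (\<lambda>x. f x w) field_differentiable (at z) \<and> (\<lambda>x. f z x) field_differentiable (at w))"

definition subsp :: "cfun2 set \<Rightarrow> bool" where
  "subsp W \<longleftrightarrow> (\<lambda>z w. 0) \<in> W \<and> (\<forall>f\<in>W. \<forall>g\<in>W. \<forall>a b. (\<lambda>z w. a * f z w + b * g z w) \<in> W)"

definition lin :: "(cfun2 \<Rightarrow> cfun2) \<Rightarrow> bool" where
  "lin T \<longleftrightarrow> (\<forall>f g a b. nice f \<longrightarrow> nice g \<longrightarrow> T (\<lambda>z w. a * f z w + b * g z w) = (\<lambda>z w. a * T f z w + b * T g z w))"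

lemma subsp_comb: "subsp W \<Longrightarrow> f \<in> W \<Longrightarrow> g \<in> W \<Longrightarrow> (\<lambda>z w. a * f z w + b * g z w) \<in> W"
  unfolding subsp_def by blast

lemma subsp_eq: "subsp W \<Longrightarrow> f \<in> W \<Longrightarrow> g \<in> W \<Longrightarrow> h = (\<lambda>z w. a * f z w + b * g z w) \<Longrightarrow> h \<in> W"
  using subsp_comb by blast

lemma subsp_zero: "subsp W \<Longrightarrow> (\<lambda>z w. 0) \<in> W"
  unfolding subsp_def by blast

lemma subsp_sum: assumes "subsp W" shows "finite N \<Longrightarrow> (\<forall>n\<in>N. g n \<in> W) \<Longrightarrow> (\<lambda>z w. \<Sum>n\<in>N. g n z w) \<in> W"
proof (induction N rule: finite_induct)
  case empty then show ?case using assms by (simp add: subsp_zero)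
next
  case (insert x F)
  have "(\<lambda>z w. \<Sum>n\<in>insert x F. g n z w) = (\<lambda>z w. 1 * g x z w + 1 * (\<Sum>n\<in>F. g n z w))"
    using insert by simp
  moreover have "(\<lambda>z w. \<Sum>n\<in>F. g n z w) \<in> W" using insert by simp
  moreover have "g x \<in> W" using insert by simp
  ultimately show ?case using subsp_eq[OF assms] by blast
qed

lemma cspan2_least: assumes "subsp W" "X \<subseteq> W" shows "cspan2 X \<subseteq> W"
proof
  fix f assume "f \<in> cspan2 X"
  then obtain S c where S: "finite S" "S \<subseteq> X" "f = (\<lambda>z w. \<Sum>g\<in>S. c g * g z w)"
    unfolding cspan2_def by blast
  have "\<forall>g\<in>S. (\<lambda>z w. c g * g z w) \<in> W"
  proof
    fix g assume "g \<in> S"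
    then have "g \<in> W" using S assms by auto
    then show "(\<lambda>z w. c g * g z w) \<in> W"
      using subsp_eq[OF assms(1), of g g _ "c g" 0] by auto
  qed
  then show "f \<in> W" using subsp_sum[OF assms(1) S(1), of "\<lambda>g z w. c g * g z w"] S(3) by simp
qed

lemma cspan2_sup: "X \<subseteq> cspan2 X"
proof
  fix x assume "x \<in> X"
  then show "x \<in> cspan2 X" unfolding cspan2_def
    by (intro CollectI exI[of _ "{x}"] exI[of _ "\<lambda>_. 1"]) auto
qed

lemma cspan2_mono: "X \<subseteq> Y \<Longrightarrow> cspan2 X \<subseteq> cspan2 Y"
  unfolding cspan2_def by blast

lemma sum_restr_if:
  assumes "finite S" "T \<subseteq> S"
  shows "(\<Sum>x\<in>S. (if x \<in> T then c x else 0) * (F x :: complex)) = (\<Sum>x\<in>T. c x * F x)"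
proof -
  have "(\<Sum>x\<in>S. (if x \<in> T then c x else 0) * F x) = (\<Sum>x\<in>S. if x \<in> T then c x * F x else 0)"
    by (rule sum.cong) auto
  also have "\<dots> = (\<Sum>x\<in>S \<inter> T. c x * F x)" using assms by (simp add: sum.inter_restrict)
  also have "S \<inter> T = T" using assms by auto
  finally show ?thesis .
qed

lemma sum_restr_if2:
  assumes "finite S" "T \<subseteq> S"
  shows "(\<Sum>x\<in>S. (if x \<in> T then F x else (\<lambda>z w. 0)) z w) = (\<Sum>x\<in>T. (F x z w :: complex))"
proof -
  have "(\<Sum>x\<in>S. (if x \<in> T then F x else (\<lambda>z w. 0)) z w) = (\<Sum>x\<in>S. if x \<in> T then F x z w else 0)"
    by (rule sum.cong) auto
  also have "\<dots> = (\<Sum>x\<in>S \<inter> T. F x z w)" using assms by (simp add: sum.inter_restrict)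
  also have "S \<inter> T = T" using assms by auto
  finally show ?thesis .
qed

lemma subsp_cspan2: "subsp (cspan2 X)"
  unfolding subsp_def
proof (intro conjI ballI allI)
  show "(\<lambda>z w. 0) \<in> cspan2 X" unfolding cspan2_def
    by (intro CollectI exI[of _ "{}"]) auto
next
  fix f g a b assume f: "f \<in> cspan2 X" and g: "g \<in> cspan2 X"
  obtain S1 c1 where S1: "finite S1" "S1 \<subseteq> X" "f = (\<lambda>z w. \<Sum>h\<in>S1. c1 h * h z w)"
    using f unfolding cspan2_def by blast
  obtain S2 c2 where S2: "finite S2" "S2 \<subseteq> X" "g = (\<lambda>z w. \<Sum>h\<in>S2. c2 h * h z w)"
    using g unfolding cspan2_def by blast
  define c where "c h = a * (if h \<in> S1 then c1 h else 0) + b * (if h \<in> S2 then c2 h else 0)" for h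
  have "(\<lambda>z w. a * f z w + b * g z w) = (\<lambda>z w. \<Sum>h\<in>S1 \<union> S2. c h * h z w)"
  proof (intro ext)
    fix z w
    have "(\<Sum>h\<in>S1 \<union> S2. c h * h z w) = a * (\<Sum>h\<in>S1 \<union> S2. (if h \<in> S1 then c1 h else 0) * h z w)
        + b * (\<Sum>h\<in>S1 \<union> S2. (if h \<in> S2 then c2 h else 0) * h z w)"
      unfolding c_def by (simp add: algebra_simps sum.distrib sum_distrib_left)
    also have "\<dots> = a * f z w + b * g z w"
      using S1 S2 by (simp add: sum_restr_if)
    finally show "a * f z w + b * g z w = (\<Sum>h\<in>S1 \<union> S2. c h * h z w)" by simp
  qed
  then show "(\<lambda>z w. a * f z w + b * g z w) \<in> cspan2 X" unfolding cspan2_def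
    using S1 S2 by (intro CollectI exI[of _ "S1 \<union> S2"] exI[of _ c]) auto
qed

definition Bset :: "cfun2 set" where
  "Bset = {basis_fun n p q | n p q. (p, q) \<in> Omega n}"

lemma subsp_A_all: "subsp A_all"
  unfolding subsp_def
proof (intro conjI ballI allI)
  show "(\<lambda>z w. 0) \<in> A_all" unfolding A_all_def
    by (intro CollectI exI[of _ "{}"]) auto
next
  fix f g a b assume f: "f \<in> A_all" and g: "g \<in> A_all"
  obtain N1 g1 where N1: "finite N1" "\<forall>n\<in>N1. g1 n \<in> A_n n" "f = (\<lambda>z w. \<Sum>n\<in>N1. g1 n z w)"
    using f unfolding A_all_def by blast
  obtain N2 g2 where N2: "finite N2" "\<forall>n\<in>N2. g2 n \<in> A_n n" "g = (\<lambda>z w. \<Sum>n\<in>N2. g2 n z w)"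
    using g unfolding A_all_def by blast
  define G1 where "G1 n = (if n \<in> N1 then g1 n else (\<lambda>z w. 0))" for n
  define G2 where "G2 n = (if n \<in> N2 then g2 n else (\<lambda>z w. 0))" for n
  define G where "G n = (\<lambda>z w. a * G1 n z w + b * G2 n z w)" for n
  have sA: "subsp (A_n n)" for n unfolding A_n_def by (rule subsp_cspan2)
  have G1A: "G1 n \<in> A_n n" for n using N1 subsp_zero[OF sA] unfolding G1_def by auto
  have G2A: "G2 n \<in> A_n n" for n using N2 subsp_zero[OF sA] unfolding G2_def by auto
  have GA: "\<forall>n\<in>N1 \<union> N2. G n \<in> A_n n" unfolding G_def using subsp_comb[OF sA G1A G2A] by blast
  have "(\<lambda>z w. a * f z w + b * g z w) = (\<lambda>z w. \<Sum>n\<in>N1 \<union> N2. G n z w)"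
  proof (intro ext)
    fix z w
    have "(\<Sum>n\<in>N1 \<union> N2. G n z w) = a * (\<Sum>n\<in>N1 \<union> N2. G1 n z w) + b * (\<Sum>n\<in>N1 \<union> N2. G2 n z w)"
      unfolding G_def by (simp add: sum.distrib sum_distrib_left)
    also have "\<dots> = a * f z w + b * g z w"
      using N1 N2 unfolding G1_def G2_def by (simp add: sum_restr_if2)
    finally show "a * f z w + b * g z w = (\<Sum>n\<in>N1 \<union> N2. G n z w)" by simp
  qed
  then show "(\<lambda>z w. a * f z w + b * g z w) \<in> A_all" unfolding A_all_def
    using N1 N2 GA by (intro CollectI exI[of _ "N1 \<union> N2"] exI[of _ G]) auto
qed

lemma A_all_eq: "A_all = cspan2 Bset"
proof
  show "cspan2 Bset \<subseteq> A_all"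
  proof (rule cspan2_least[OF subsp_A_all])
    show "Bset \<subseteq> A_all"
    proof
      fix x assume "x \<in> Bset"
      then obtain n p q where x: "x = basis_fun n p q" "(p,q) \<in> Omega n" unfolding Bset_def by blast
      have "x \<in> A_n n" unfolding A_n_def using x cspan2_sup by fastforce
      then show "x \<in> A_all" unfolding A_all_def
        by (intro CollectI exI[of _ "{n}"] exI[of _ "\<lambda>_. x"]) auto
    qed
  qed
next
  show "A_all \<subseteq> cspan2 Bset"
  proof
    fix f assume "f \<in> A_all"
    then obtain N g where N: "finite N" "\<forall>n\<in>N. g n \<in> A_n n" "f = (\<lambda>z w. \<Sum>n\<in>N. g n z w)"
      unfolding A_all_def by blast
    have "A_n n \<subseteq> cspan2 Bset" for n unfolding A_n_def Bset_def
      by (rule cspan2_mono) auto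
    then have "\<forall>n\<in>N. g n \<in> cspan2 Bset" using N(2) by blast
    then show "f \<in> cspan2 Bset" using subsp_sum[OF subsp_cspan2 N(1), of g] N(3) by simp
  qed
qed



lemma nice_bf: "nice (basis_fun n p q)"
  unfolding nice_def field_differentiable_def using bf_dz bf_dw by blast

lemma nice_comb: "nice f \<Longrightarrow> nice g \<Longrightarrow> nice (\<lambda>z w. a * f z w + b * g z w)"
  unfolding nice_def by (auto intro!: field_differentiable_add field_differentiable_mult)

lemma nice_zero: "nice (\<lambda>z w. 0)"
  unfolding nice_def by simp

lemma subsp_nice: "subsp {f. nice f}"
  unfolding subsp_def using nice_comb nice_zero by blast

lemma lin_Dz: "lin Dz"
  unfolding lin_def
proof (intro allI impI ext)
  fix f g :: cfun2 and a b z w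
  assume f: "nice f" and g: "nice g"
  show "Dz (\<lambda>z w. a * f z w + b * g z w) z w = a * Dz f z w + b * Dz g z w"
  proof (cases "dom2 z w")
    case True
    then have "(\<lambda>x. f x w) field_differentiable (at z)" "(\<lambda>x. g x w) field_differentiable (at z)"
      using f g unfolding nice_def by auto
    then show ?thesis using True
      by (simp add: Dz_def restr_def field_differentiable_mult field_differentiable_const)
  qed (simp add: Dz_def restr_def)
qed

lemma lin_Dw: "lin Dw"
  unfolding lin_def
proof (intro allI impI ext)
  fix f g :: cfun2 and a b z w
  assume f: "nice f" and g: "nice g"
  show "Dw (\<lambda>z w. a * f z w + b * g z w) z w = a * Dw f z w + b * Dw g z w"
  proof (cases "dom2 z w")
    case True
    then have "(\<lambda>x. f z x) field_differentiable (at w)" "(\<lambda>x. g z x) field_differentiable (at w)"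
      using f g unfolding nice_def by auto
    then show ?thesis using True
      by (simp add: Dw_def restr_def field_differentiable_mult field_differentiable_const)
  qed (simp add: Dw_def restr_def)
qed

lemma lin_mult: "lin T \<Longrightarrow> lin (\<lambda>f z w. h z w * T f z w)"
  unfolding lin_def by (auto simp: algebra_simps)

lemma lin_six: assumes "T \<in> six_ops" shows "lin T"
proof -
  have l: "lin (\<lambda>f z w. z * Dz f z w)" "lin (\<lambda>f z w. z^2 * Dz f z w)"
       "lin (\<lambda>f z w. w * Dw f z w)" "lin (\<lambda>f z w. w^2 * Dw f z w)"
    by (rule lin_mult[OF lin_Dz] lin_mult[OF lin_Dw])+
  from assms have "T = Dz \<or> T = (\<lambda>f z w. z * Dz f z w) \<or> T = (\<lambda>f z w. z^2 * Dz f z w)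
     \<or> T = Dw \<or> T = (\<lambda>f z w. w * Dw f z w) \<or> T = (\<lambda>f z w. w^2 * Dw f z w)"
    unfolding six_ops_def by simp
  then show ?thesis using l lin_Dz lin_Dw by (elim disjE; simp)
qed

lemma lin_image:
  assumes "lin T" "X \<subseteq> {f. nice f}" "\<forall>x\<in>X. T x \<in> W" "subsp W"
  shows "\<forall>f\<in>cspan2 X. T f \<in> W"
proof -
  let ?Y = "{f. nice f \<and> T f \<in> W}"
  have "subsp ?Y" unfolding subsp_def
  proof (intro conjI ballI allI)
    have "T (\<lambda>z w. 0 * (\<lambda>z w. 0) z w + 0 * (\<lambda>z w. 0) z w) = (\<lambda>z w. 0 * T (\<lambda>z w. 0) z w + 0 * T (\<lambda>z w. 0) z w)"
      using assms(1) nice_zero unfolding lin_def by blast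
    then have "T (\<lambda>z w. 0) = (\<lambda>z w. 0)" by simp
    then show "(\<lambda>z w. 0) \<in> ?Y" using nice_zero subsp_zero[OF assms(4)] by simp
  next
    fix f g a b assume f: "f \<in> ?Y" and g: "g \<in> ?Y"
    then have "T (\<lambda>z w. a * f z w + b * g z w) = (\<lambda>z w. a * T f z w + b * T g z w)"
      using assms(1) unfolding lin_def by blast
    then show "(\<lambda>z w. a * f z w + b * g z w) \<in> ?Y"
      using f g nice_comb subsp_comb[OF assms(4)] by auto
  qed
  moreover have "X \<subseteq> ?Y" using assms(2,3) by auto
  ultimately have "cspan2 X \<subseteq> ?Y" by (rule cspan2_least)
  then show ?thesis by auto
qed

lemma A_nice: "cspan2 Bset \<subseteq> {f. nice f}"
  by (rule cspan2_least[OF subsp_nice]) (auto simp: Bset_def nice_bf)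

lemma rel_fun: "basis_fun k a b = (\<lambda>z w. 1 * basis_fun (Suc k) (Suc a) b z w + (-1) * basis_fun (Suc k) a (Suc b) z w)"
  by (intro ext) (simp add: rel_pt[of k a b])

lemma memA:
  assumes "a \<le> k" "b \<le> k"
  shows "basis_fun k a b \<in> cspan2 Bset"
proof (cases "(a, b) = (k, k)")
  case False
  then have "basis_fun k a b \<in> Bset" using assms unfolding Bset_def Omega_def by blast
  then show ?thesis using cspan2_sup by blast
next
  case True
  have "basis_fun (Suc k) (Suc a) b \<in> Bset" "basis_fun (Suc k) a (Suc b) \<in> Bset"
    using True unfolding Bset_def Omega_def by force+
  then have "basis_fun (Suc k) (Suc a) b \<in> cspan2 Bset" "basis_fun (Suc k) a (Suc b) \<in> cspan2 Bset"
    using cspan2_sup by blast+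
  then show ?thesis by (rule subsp_eq[OF subsp_cspan2 _ _ rel_fun])
qed



lemma subsp_eq2: "subsp W \<Longrightarrow> f \<in> W \<Longrightarrow> g \<in> W \<Longrightarrow> h = (\<lambda>z w. a * f z w - b * g z w) \<Longrightarrow> h \<in> W"
  using subsp_eq[of W f g h a "-b"] by simp

lemma Omega_D: "(p, q) \<in> Omega n \<Longrightarrow> p \<le> n \<and> q \<le> n \<and> (p, q) \<noteq> (n, n)"
  unfolding Omega_def by auto

lemma a_Dz: "(p, q) \<in> Omega n \<Longrightarrow> Dz (basis_fun n p q) \<in> cspan2 Bset"
  using Omega_D[of p q n]
  by (intro subsp_eq2[OF subsp_cspan2 memA memA Dz_bf]) auto

lemma a_zDz: "(p, q) \<in> Omega n \<Longrightarrow> (\<lambda>z w. z * Dz (basis_fun n p q) z w) \<in> cspan2 Bset"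
  using Omega_D[of p q n]
  by (intro subsp_eq2[OF subsp_cspan2 memA memA zDz_bf]) auto

lemma a_Dw: "(p, q) \<in> Omega n \<Longrightarrow> Dw (basis_fun n p q) \<in> cspan2 Bset"
  using Omega_D[of p q n]
  by (intro subsp_eq[OF subsp_cspan2 memA memA Dw_bf]) auto

lemma a_wDw: "(p, q) \<in> Omega n \<Longrightarrow> (\<lambda>z w. w * Dw (basis_fun n p q) z w) \<in> cspan2 Bset"
  using Omega_D[of p q n]
  by (intro subsp_eq[OF subsp_cspan2 memA memA wDw_bf]) auto

lemma a_z2Dz: assumes "(p, q) \<in> Omega n" shows "(\<lambda>z w. z^2 * Dz (basis_fun n p q) z w) \<in> cspan2 Bset"
proof (cases "p < n")
  case True
  then show ?thesis using Omega_D[OF assms]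
    by (intro subsp_eq2[OF subsp_cspan2 memA memA z2Dz_bf]) auto
next
  case False
  then have pn: "p = n" "q < n" using Omega_D[OF assms] by auto
  have "(\<lambda>z w. z^2 * Dz (basis_fun n p q) z w) = (\<lambda>z w. (- of_nat n) * basis_fun (Suc n) (Suc n) (Suc q) z w + 0 * basis_fun (Suc n) (Suc n) (Suc q) z w)"
    unfolding z2Dz_bf pn(1) by (intro ext) (simp add: rel_pt[of n "Suc n" q] algebra_simps)
  moreover have m: "basis_fun (Suc n) (Suc n) (Suc q) \<in> cspan2 Bset" using pn by (intro memA) auto
  ultimately show ?thesis using subsp_eq[OF subsp_cspan2 m m] by blast
qed

lemma a_w2Dw: assumes "(p, q) \<in> Omega n" shows "(\<lambda>z w. w^2 * Dw (basis_fun n p q) z w) \<in> cspan2 Bset"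
proof (cases "q < n")
  case True
  then show ?thesis using Omega_D[OF assms]
    by (intro subsp_eq[OF subsp_cspan2 memA memA w2Dw_bf]) auto
next
  case False
  then have pn: "q = n" "p < n" using Omega_D[OF assms] by auto
  have "(\<lambda>z w. w^2 * Dw (basis_fun n p q) z w) = (\<lambda>z w. (of_nat n) * basis_fun (Suc n) (Suc p) (Suc n) z w + 0 * basis_fun (Suc n) (Suc p) (Suc n) z w)"
    unfolding w2Dw_bf pn(1) by (intro ext) (simp add: rel_pt[of n p "Suc n"] algebra_simps)
  moreover have m: "basis_fun (Suc n) (Suc p) (Suc n) \<in> cspan2 Bset" using pn by (intro memA) auto
  ultimately show ?thesis using subsp_eq[OF subsp_cspan2 m m] by blast
qed

lemma six_cases:
  assumes "T \<in> six_ops"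
  shows "T = Dz \<or> T = (\<lambda>f z w. z * Dz f z w) \<or> T = (\<lambda>f z w. z^2 * Dz f z w)
     \<or> T = Dw \<or> T = (\<lambda>f z w. w * Dw f z w) \<or> T = (\<lambda>f z w. w^2 * Dw f z w)"
  using assms unfolding six_ops_def by simp

lemma six_bf: assumes "T \<in> six_ops" "x \<in> Bset" shows "T x \<in> cspan2 Bset"
proof -
  obtain n p q where x: "x = basis_fun n p q" "(p, q) \<in> Omega n" using assms(2) unfolding Bset_def by blast
  show ?thesis using six_cases[OF assms(1)] a_Dz[OF x(2)] a_zDz[OF x(2)] a_z2Dz[OF x(2)]
      a_Dw[OF x(2)] a_wDw[OF x(2)] a_w2Dw[OF x(2)] unfolding x(1) by (elim disjE) simp_all
qed

lemma partA: "T \<in> six_ops \<Longrightarrow> f \<in> cspan2 Bset \<Longrightarrow> T f \<in> cspan2 Bset"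
proof -
  have "Bset \<subseteq> {f. nice f}" unfolding Bset_def using nice_bf by blast
  moreover assume "T \<in> six_ops" "f \<in> cspan2 Bset"
  ultimately show ?thesis using lin_image[OF lin_six _ _ subsp_cspan2, of T Bset Bset] six_bf by blast
qed



lemma alg2:
  fixes z w :: complex
  assumes "z - w \<noteq> 0"
  shows "z*w/(z-w) = -(z^2/(z-w) - z^3/(z-w)^2) - z*w^2/(z-w)^2"
  using assms by (simp add: divide_simps) (simp add: algebra_simps power2_eq_square power3_eq_cube)

lemmas zDz_pt = zDz_bf[unfolded fun_eq_iff, rule_format]
lemmas z2Dz_pt = z2Dz_bf[unfolded fun_eq_iff, rule_format]
lemmas wDw_pt = wDw_bf[unfolded fun_eq_iff, rule_format]
lemmas w2Dw_pt = w2Dw_bf[unfolded fun_eq_iff, rule_format]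

context
  fixes V :: "cfun2 set"
  assumes sV: "subsp V"
    and u0: "basis_fun 1 0 0 \<in> V"
    and cDz: "\<And>f. f \<in> V \<Longrightarrow> Dz f \<in> V"
    and czDz: "\<And>f. f \<in> V \<Longrightarrow> (\<lambda>z w. z * Dz f z w) \<in> V"
    and cz2Dz: "\<And>f. f \<in> V \<Longrightarrow> (\<lambda>z w. z^2 * Dz f z w) \<in> V"
    and cwDw: "\<And>f. f \<in> V \<Longrightarrow> (\<lambda>z w. w * Dw f z w) \<in> V"
    and cw2Dw: "\<And>f. f \<in> V \<Longrightarrow> (\<lambda>z w. w^2 * Dw f z w) \<in> V"
begin

lemma R1: assumes "n \<noteq> 0" "basis_fun n p q \<in> V" "basis_fun n (p-1) q \<in> V"
  shows "basis_fun (Suc n) p q \<in> V"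
proof -
  have "basis_fun (Suc n) p q = (\<lambda>z w. (of_nat p / of_nat n) * basis_fun n (p-1) q z w + (-1 / of_nat n) * Dz (basis_fun n p q) z w)"
    using assms(1) unfolding Dz_bf by (intro ext) (simp add: field_simps)
  then show ?thesis using subsp_eq[OF sV assms(3) cDz[OF assms(2)]] by blast
qed

lemma R2: assumes "n \<noteq> 0" "basis_fun n p q \<in> V"
  shows "basis_fun (Suc n) (Suc p) q \<in> V"
proof -
  have "basis_fun (Suc n) (Suc p) q = (\<lambda>z w. (of_nat p / of_nat n) * basis_fun n p q z w + (-1 / of_nat n) * (\<lambda>z w. z * Dz (basis_fun n p q) z w) z w)"
    using assms(1) by (intro ext) (simp add: zDz_pt field_simps)
  then show ?thesis using subsp_eq[OF sV assms(2) czDz[OF assms(2)]] by blast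
qed

lemma R4: assumes "n \<noteq> 0" "basis_fun n p q \<in> V"
  shows "basis_fun (Suc n) p (Suc q) \<in> V"
proof -
  have "basis_fun (Suc n) p (Suc q) = (\<lambda>z w. (- of_nat q / of_nat n) * basis_fun n p q z w + (1 / of_nat n) * (\<lambda>z w. w * Dw (basis_fun n p q) z w) z w)"
    using assms(1) by (intro ext) (simp add: wDw_pt field_simps)
  then show ?thesis using subsp_eq[OF sV assms(2) cwDw[OF assms(2)]] by blast
qed

lemma R3_0: assumes "n \<noteq> 0" "basis_fun n 0 q \<in> V"
  shows "basis_fun (Suc n) 2 q \<in> V"
proof -
  have "basis_fun (Suc n) 2 q = (\<lambda>z w. 0 * basis_fun n 0 q z w + (-1 / of_nat n) * (\<lambda>z w. z^2 * Dz (basis_fun n 0 q) z w) z w)"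
    using assms(1) by (intro ext) (simp add: z2Dz_pt, simp add: field_simps numeral_2_eq_2)
  then show ?thesis using subsp_eq[OF sV assms(2) cz2Dz[OF assms(2)]] by blast
qed

lemma R5_0: assumes "n \<noteq> 0" "basis_fun n p 0 \<in> V"
  shows "basis_fun (Suc n) p 2 \<in> V"
proof -
  have "basis_fun (Suc n) p 2 = (\<lambda>z w. 0 * basis_fun n p 0 z w + (1 / of_nat n) * (\<lambda>z w. w^2 * Dw (basis_fun n p 0) z w) z w)"
    using assms(1) by (intro ext) (simp add: w2Dw_pt, simp add: field_simps numeral_2_eq_2)
  then show ?thesis using subsp_eq[OF sV assms(2) cw2Dw[OF assms(2)]] by blast
qed

lemma relV: assumes "basis_fun (Suc k) (Suc a) b \<in> V" "basis_fun (Suc k) a (Suc b) \<in> V"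
  shows "basis_fun k a b \<in> V"
  by (rule subsp_eq[OF sV assms rel_fun])

lemma small:
  "basis_fun 1 1 0 \<in> V" "basis_fun 1 0 1 \<in> V" "basis_fun 0 0 0 \<in> V" "basis_fun 1 1 1 \<in> V"
proof -
  have b202: "basis_fun 2 2 0 \<in> V" using R3_0[of 1 0] u0 by (simp add: numeral_2_eq_2)
  have b022: "basis_fun 2 0 2 \<in> V" using R5_0[of 1 0] u0 by (simp add: numeral_2_eq_2)
  have b330: "basis_fun 3 3 0 \<in> V" using R2[of 2 2 0] b202 by (simp add: numeral_eq_Suc)
  have b312: "basis_fun 3 1 2 \<in> V" using R2[of 2 0 2] b022 by (simp add: numeral_eq_Suc)
  have "basis_fun 3 2 1 = (\<lambda>z w. 1 * basis_fun 3 3 0 z w + (-1) * basis_fun 2 2 0 z w)"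
    by (intro ext) (simp add: rel_pt[of "Suc (Suc 0)" "Suc (Suc 0)" 0] numeral_eq_Suc)
  then have b321: "basis_fun 3 2 1 \<in> V" using subsp_eq[OF sV b330 b202] by blast
  have b211: "basis_fun 2 1 1 \<in> V" using relV[of 2 1 1] b321 b312 by (simp add: numeral_eq_Suc)
  show b110: "basis_fun 1 1 0 \<in> V" using relV[of 1 1 0] b202 b211 by (simp add: numeral_eq_Suc)
  show b101: "basis_fun 1 0 1 \<in> V" using relV[of 1 0 1] b211 b022 by (simp add: numeral_eq_Suc)
  show "basis_fun 0 0 0 \<in> V" using relV[of 0 0 0] b110 b101 by simp
  have "basis_fun 1 1 1 = (\<lambda>z w. (-1) * (\<lambda>z w. z^2 * Dz (basis_fun 1 1 0) z w) z w + (-1) * (\<lambda>z w. w^2 * Dw (basis_fun 1 1 0) z w) z w)"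
  proof (intro ext)
    fix z w :: complex
    show "basis_fun 1 1 1 z w = (-1) * (\<lambda>z w. z^2 * Dz (basis_fun 1 1 0) z w) z w + (-1) * (\<lambda>z w. w^2 * Dw (basis_fun 1 1 0) z w) z w"
    proof (cases "dom2 z w")
      case True
      then have nz: "z - w \<noteq> 0" using dom2_ne by auto
      have e1: "basis_fun 1 1 1 z w = z*w/(z-w)" using True by (simp add: bf_val)
      have e2: "(-1) * (z^2 * Dz (basis_fun 1 1 0) z w) + (-1) * (w^2 * Dw (basis_fun 1 1 0) z w)
         = -(z^2/(z-w) - z^3/(z-w)^2) - z*w^2/(z-w)^2"
        using True by (simp add: z2Dz_pt w2Dw_pt, simp add: bf_val numeral_eq_Suc)
      show ?thesis using e1 e2 alg2[OF nz] by simp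
    qed (simp add: z2Dz_pt w2Dw_pt bf_out)
  qed
  then show "basis_fun 1 1 1 \<in> V" using subsp_eq[OF sV cz2Dz[OF b110] cw2Dw[OF b110]] by blast
qed

lemma kkk: "basis_fun d d d \<in> V"
proof (induction d)
  case 0 then show ?case using small by simp
next
  case (Suc d)
  show ?case
  proof (cases "d = 0")
    case True then show ?thesis using small by simp
  next
    case False
    have "basis_fun (Suc d) (Suc d) (Suc d) = (\<lambda>z w. (-1 / of_nat d) * (\<lambda>z w. z^2 * Dz (basis_fun d d d) z w) z w + 0 * basis_fun d d d z w)"
      using False by (intro ext) (simp add: z2Dz_pt rel_pt[of d "Suc d" d] field_simps)
    then show ?thesis using subsp_eq[OF sV cz2Dz[OF Suc.IH] Suc.IH] by blast
  qed
qed

lemma levelS: "\<forall>a\<le>Suc n. \<forall>b\<le>Suc n. basis_fun (Suc n) a b \<in> V"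
proof (induction n)
  case 0
  show ?case
  proof (intro allI impI)
    fix a b :: nat assume "a \<le> Suc 0" "b \<le> Suc 0"
    then have "a = 0 \<or> a = 1" "b = 0 \<or> b = 1" by auto
    then show "basis_fun (Suc 0) a b \<in> V" using small u0 by auto
  qed
next
  case (Suc n)
  let ?m = "Suc n"
  show ?case
  proof (intro allI impI)
    fix a b :: nat assume ab: "a \<le> Suc ?m" "b \<le> Suc ?m"
    show "basis_fun (Suc ?m) a b \<in> V"
    proof (cases "b \<le> ?m")
      case True
      show ?thesis
      proof (cases a)
        case 0
        then show ?thesis using R1[of ?m 0 b] Suc.IH True by simp
      next
        case (Suc a')
        then show ?thesis using R2[of ?m a' b] Suc.IH True ab by simp
      qed
    next
      case False
      then have b: "b = Suc ?m" using ab by simp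
      show ?thesis
      proof (cases "a \<le> ?m")
        case True
        then show ?thesis using R4[of ?m a ?m] Suc.IH b by simp
      next
        case False
        then have "a = Suc ?m" using ab by simp
        then show ?thesis using kkk b by simp
      qed
    qed
  qed
qed

lemma all_bf: "a \<le> n \<Longrightarrow> b \<le> n \<Longrightarrow> basis_fun n a b \<in> V"
  using levelS[of "n - 1"] small by (cases n) auto

end

lemma foldr_cons_app: "foldr (\<circ>) (T # Ts) id u = T (foldr (\<circ>) Ts id u)"
  by simp

theorem lemma1:
  shows "(\<forall>T\<in>six_ops. \<forall>f\<in>A_all. T f \<in> A_all)
    \<and> cspan2 {foldr (\<circ>) Ts id (restr (\<lambda>z w. 1 / (z - w))) | Ts. set Ts \<subseteq> six_ops} = A_all"
proof
  show "\<forall>T\<in>six_ops. \<forall>f\<in>A_all. T f \<in> A_all" unfolding A_all_eq using partA by blast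
next
  let ?u = "restr (\<lambda>z w. 1 / (z - w))"
  let ?O = "{foldr (\<circ>) Ts id ?u | Ts. set Ts \<subseteq> six_ops}"
  have u: "?u = basis_fun 1 0 0" unfolding basis_fun_def by simp
  have orbA: "set Ts \<subseteq> six_ops \<Longrightarrow> foldr (\<circ>) Ts id ?u \<in> cspan2 Bset" for Ts
  proof (induction Ts)
    case Nil then show ?case using memA[of 0 1 0] u by simp
  next
    case (Cons T Ts)
    have e: "foldr (\<circ>) (T # Ts) id ?u = T (foldr (\<circ>) Ts id ?u)" by simp
    have T: "set Ts \<subseteq> six_ops" "T \<in> six_ops" using Cons.prems by auto
    show ?case unfolding e by (rule partA[OF T(2) Cons.IH[OF T(1)]])
  qed
  have OA: "?O \<subseteq> cspan2 Bset" using orbA by blast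
  have sub1: "cspan2 ?O \<subseteq> cspan2 Bset" by (rule cspan2_least[OF subsp_cspan2 OA])
  have Onice: "?O \<subseteq> {f. nice f}" using OA A_nice by blast
  have clos: "T \<in> six_ops \<Longrightarrow> f \<in> cspan2 ?O \<Longrightarrow> T f \<in> cspan2 ?O" for T f
  proof -
    assume T: "T \<in> six_ops" and f: "f \<in> cspan2 ?O"
    have "\<forall>x\<in>?O. T x \<in> cspan2 ?O"
    proof
      fix x assume "x \<in> ?O"
      then obtain Ts where Ts: "x = foldr (\<circ>) Ts id ?u" "set Ts \<subseteq> six_ops" by blast
      have "T x = foldr (\<circ>) (T # Ts) id ?u" using Ts(1) by simp
      moreover have "set (T # Ts) \<subseteq> six_ops" using Ts(2) T by simp
      ultimately have "\<exists>Ts'. T x = foldr (\<circ>) Ts' id ?u \<and> set Ts' \<subseteq> six_ops"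
        by (intro exI[of _ "T # Ts"] conjI)
      then have "T x \<in> ?O" by (simp only: mem_Collect_eq)
      then show "T x \<in> cspan2 ?O" by (rule subsetD[OF cspan2_sup])
    qed
    from lin_image[OF lin_six[OF T] Onice this subsp_cspan2] f show ?thesis by (rule bspec)
  qed
  have six: "Dz \<in> six_ops" "(\<lambda>f z w. z * Dz f z w) \<in> six_ops" "(\<lambda>f z w. z^2 * Dz f z w) \<in> six_ops"
    "(\<lambda>f z w. w * Dw f z w) \<in> six_ops" "(\<lambda>f z w. w^2 * Dw f z w) \<in> six_ops"
    unfolding six_ops_def by simp_all
  have uO: "basis_fun 1 0 0 \<in> cspan2 ?O"
  proof -
    have "\<exists>Ts'. foldr (\<circ>) [] id ?u = foldr (\<circ>) Ts' id ?u \<and> set Ts' \<subseteq> six_ops"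
      by (intro exI[of _ "[]"]) simp
    then have "foldr (\<circ>) [] id ?u \<in> ?O" by (simp only: mem_Collect_eq)
    then have "foldr (\<circ>) [] id ?u \<in> cspan2 ?O" by (rule subsetD[OF cspan2_sup])
    then show ?thesis using u by simp
  qed
  have "Bset \<subseteq> cspan2 ?O"
  proof
    fix x assume "x \<in> Bset"
    then obtain n p q where x: "x = basis_fun n p q" "(p, q) \<in> Omega n" unfolding Bset_def by blast
    show "x \<in> cspan2 ?O" unfolding x(1)
      by (rule all_bf[OF subsp_cspan2 uO clos[OF six(1)] clos[OF six(2)] clos[OF six(3)] clos[OF six(4)] clos[OF six(5)]])
         (use Omega_D[OF x(2)] in auto)
  qed
  then have "cspan2 Bset \<subseteq> cspan2 ?O" by (rule cspan2_least[OF subsp_cspan2])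
  then show "cspan2 ?O = A_all" unfolding A_all_eq using sub1 by blast
qed

end
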